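(* Consider the adaptive experiment described in the context, with truncated propensities $\pi_t(a\mid X_t,\Omega_{t-1})\in[1/k_t,1-1/k_t]$. Assume: $\mathrm{Var}(Y_t)<\infty$; $v(a,x)<\infty$ for all $a\in\{0,1\}$, $x\in\mathcal{X}$; $k_t\lVert\hat f_t-f\rVert_2=o_{\mathbb{P}}(1)$; $k_t\lVert\pi_t-\pi\rVert_2=o_{\mathbb{P}}(1)$ for some policy $\pi$ with $1/\pi(a\mid x)<\infty$; $1/\pi^{\mathrm{AIPW}}<C_1$ for some constant $C_1<\infty$; and $\mathrm{Var}(\hat f_{t-1}(a,X_t))<\infty$ for $a\in\{0,1\}$. Then, as $t\to\infty$, $$\mathbb{E} \left[ \left(\hat{f}_{t-1}(1,X_t) - \hat{f}_{t-1}(0,X_t) - \theta_0\right)^2 - \left( f(1,X_t) - f(0,X_t) - \theta_0 \right)^2 ~\Big|~\Omega_{t-1}\right]= o_{\mathbb{P}}(1).$$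
   Context: Data-generating process: subjects $t=1,2,\dots$ arrive sequentially. The tuples $(X_t, Y_t(0), Y_t(1))$, $X_t\in\mathcal{X}$, are i.i.d. over $t$. Let $\Omega_{t-1}=\{(X_s,A_s,Y_s): s\le t-1\}$ be the history. Given $X_t$ and $\Omega_{t-1}$, the treatment $A_t\in\{0,1\}$ is drawn with $\mathbb{P}(A_t=1\mid X_t,\Omega_{t-1})=\pi_t(1\mid X_t,\Omega_{t-1})$, independently of the current potential outcomes; $Y_t = \mathbb{1}[A_t=0]Y_t(0)+\mathbb{1}[A_t=1]Y_t(1)$. The policies are $\pi_t=(\tilde\pi_t\vee 1/k_t)\wedge(1-1/k_t)$ for arbitrary $(0,1)$-valued policies $\tilde\pi_t$ and user-chosen $k_t\in[2,\infty)$. $f(a,x)=\mathbb{E}[Y_t(a)\mid X_t=x]$, $v(a,x)=\mathrm{Var}(Y_t(a)\mid X_t=x)$, $\theta_0=\mathbb{E}[Y(1)-Y(0)]$; $\hat f_t$ is an estimator of $f$ built from $\Omega_t$; $\lVert g\rVert_2^2=\int g(x)^2d\mathbb{P}(x)$. $\pi^{\mathrm{AIPW}}(1\mid x)=\frac{\sqrt{v(1,x)}}{\sqrt{v(1,x)}+\sqrt{v(0,x)}}$, $\pi^{\mathrm{AIPW}}(0\mid x)=1-\pi^{\mathrm{AIPW}}(1\mid x)$. *)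

theory Defs
  imports "HOL-Probability.Probability"
begin

definition tuple :: "(nat \<Rightarrow> 'w \<Rightarrow> 'x) \<Rightarrow> (nat \<Rightarrow> 'w \<Rightarrow> real) \<Rightarrow> (nat \<Rightarrow> 'w \<Rightarrow> real)
    \<Rightarrow> nat \<Rightarrow> 'w \<Rightarrow> 'x \<times> real \<times> real" where
  "tuple X Y0 Y1 t = (\<lambda>\<omega>. (X t \<omega>, Y0 t \<omega>, Y1 t \<omega>))"

definition obs_outcome :: "(nat \<Rightarrow> 'w \<Rightarrow> bool) \<Rightarrow> (nat \<Rightarrow> 'w \<Rightarrow> real) \<Rightarrow> (nat \<Rightarrow> 'w \<Rightarrow> real)
    \<Rightarrow> nat \<Rightarrow> 'w \<Rightarrow> real" where
  "obs_outcome A Y0 Y1 t \<omega> = (if A t \<omega> then Y1 t \<omega> else Y0 t \<omega>)"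

text \<open>History sigma-algebra Omega_n generated by (X_s, A_s, Y_s), 1 <= s <= n
  (subjects are indexed 1,2,...; Omega_0 is trivial).\<close>
definition history :: "'w measure \<Rightarrow> 'x measure \<Rightarrow> (nat \<Rightarrow> 'w \<Rightarrow> 'x) \<Rightarrow> (nat \<Rightarrow> 'w \<Rightarrow> bool)
    \<Rightarrow> (nat \<Rightarrow> 'w \<Rightarrow> real) \<Rightarrow> nat \<Rightarrow> 'w measure" where
  "history M SX X A Y n = sigma (space M)
     (\<Union>s\<in>{1..n}. {(\<lambda>\<omega>. (X s \<omega>, A s \<omega>, Y s \<omega>)) -` B \<inter> space M | B.
        B \<in> sets (SX \<Otimes>\<^sub>M count_space UNIV \<Otimes>\<^sub>M borel)})"

definition pre_treatment :: "'w measure \<Rightarrow> 'x measure \<Rightarrow> (nat \<Rightarrow> 'w \<Rightarrow> 'x) \<Rightarrow> (nat \<Rightarrow> 'w \<Rightarrow> real)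
    \<Rightarrow> (nat \<Rightarrow> 'w \<Rightarrow> real) \<Rightarrow> (nat \<Rightarrow> 'w \<Rightarrow> bool) \<Rightarrow> nat \<Rightarrow> 'w measure" where
  "pre_treatment M SX X Y0 Y1 A t = sigma (space M)
     (sets (history M SX X A (obs_outcome A Y0 Y1) (t - 1)) \<union>
      {tuple X Y0 Y1 t -` B \<inter> space M | B. B \<in> sets (SX \<Otimes>\<^sub>M borel \<Otimes>\<^sub>M borel)})"

definition L2dist :: "'x measure \<Rightarrow> ('x \<Rightarrow> real) \<Rightarrow> ('x \<Rightarrow> real) \<Rightarrow> real" where
  "L2dist P g h = sqrt (\<integral>x. (g x - h x)\<^sup>2 \<partial>P)"

definition op1 :: "'w measure \<Rightarrow> (nat \<Rightarrow> 'w \<Rightarrow> real) \<Rightarrow> bool" where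
  "op1 M Z \<longleftrightarrow> (\<forall>e>0. (\<lambda>t. measure M {\<omega> \<in> space M. e < \<bar>Z t \<omega>\<bar>}) \<longlonglongrightarrow> 0)"

definition trunc :: "real \<Rightarrow> real \<Rightarrow> real" where
  "trunc k p = min (max p (1 / k)) (1 - 1 / k)"

text \<open>pi^AIPW(a|x) from conditional variances v(a,x) (assumed finite).\<close>
definition pi_aipw :: "(bool \<Rightarrow> 'x \<Rightarrow> ennreal) \<Rightarrow> bool \<Rightarrow> 'x \<Rightarrow> real" where
  "pi_aipw v a x =
     (let s1 = sqrt (enn2real (v True x)); s0 = sqrt (enn2real (v False x))
      in if a then s1 / (s1 + s0) else 1 - s1 / (s1 + s0))"

end

theory Submission
  imports Defs
begin

lemma meas_ident_sub: "subalgebra M F \<Longrightarrow> (\<lambda>x. x) \<in> M \<rightarrow>\<^sub>M F"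
  unfolding subalgebra_def measurable_def by (auto dest: sets.sets_into_space)

lemma (in prob_space) freeze:
  fixes K :: "'a \<times> 'b \<Rightarrow> real" and S :: "'b measure"
  assumes sub: "subalgebra M F" and Xm: "X \<in> M \<rightarrow>\<^sub>M S" and ind: "\<And>a B. a \<in> sets F \<Longrightarrow> B \<in> sets S \<Longrightarrow> prob (a \<inter> (X -` B \<inter> space M)) = prob a * prob (X -` B \<inter> space M)"
    and Km: "K \<in> borel_measurable (F \<Otimes>\<^sub>M S)" and Ki: "integrable M (\<lambda>\<omega>. K (\<omega>, X \<omega>))"
  shows "AE \<omega> in M. integrable (distr M S X) (\<lambda>x. K (\<omega>, x))"
    and "AE \<omega> in M. real_cond_exp M F (\<lambda>\<omega>. K (\<omega>, X \<omega>)) \<omega> = (\<integral>x. K (\<omega>, x) \<partial>distr M S X)"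
proof -
  let ?MF = "distr M F (\<lambda>\<omega>. \<omega>)"
  let ?N = "distr M S X"
  have idm: "(\<lambda>\<omega>. \<omega>) \<in> M \<rightarrow>\<^sub>M F" by (rule meas_ident_sub[OF sub])
  have pm: "(\<lambda>\<omega>. (\<omega>, X \<omega>)) \<in> M \<rightarrow>\<^sub>M F \<Otimes>\<^sub>M S" by (rule measurable_Pair[OF idm Xm])
  interpret MF: prob_space ?MF by (rule prob_space_distr[OF idm])
  interpret N: prob_space ?N by (rule prob_space_distr[OF Xm])
  interpret P: pair_prob_space ?MF ?N ..
  have joint: "distr M (F \<Otimes>\<^sub>M S) (\<lambda>\<omega>. (\<omega>, X \<omega>)) = ?MF \<Otimes>\<^sub>M ?N"
  proof (rule pair_measure_eqI[symmetric])
    show "sigma_finite_measure ?MF" ..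
    show "sigma_finite_measure ?N" ..
    fix A B assume A: "A \<in> sets ?MF" and B: "B \<in> sets ?N"
    have AM: "A \<in> sets M" using A sub by (auto simp: subalgebra_def)
    have AS: "A \<subseteq> space M" using sets.sets_into_space[OF AM] .
    have "emeasure (distr M (F \<Otimes>\<^sub>M S) (\<lambda>\<omega>. (\<omega>, X \<omega>))) (A \<times> B)
        = emeasure M ((\<lambda>\<omega>. (\<omega>, X \<omega>)) -` (A \<times> B) \<inter> space M)"
      using A B by (intro emeasure_distr[OF pm]) auto
    also have "(\<lambda>\<omega>. (\<omega>, X \<omega>)) -` (A \<times> B) \<inter> space M = A \<inter> (X -` B \<inter> space M)"
      using AS by auto
    also have "emeasure M (A \<inter> (X -` B \<inter> space M)) = emeasure M A * emeasure M (X -` B \<inter> space M)"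
      using ind[of A B] A B by (simp add: emeasure_eq_measure measure_nonneg ennreal_mult)
    also have "\<dots> = emeasure ?MF A * emeasure ?N B"
      using A B AS idm Xm by (simp add: emeasure_distr Int_absorb2)
    finally show "emeasure ?MF A * emeasure ?N B = emeasure (distr M (F \<Otimes>\<^sub>M S) (\<lambda>\<omega>. (\<omega>, X \<omega>))) (A \<times> B)" by simp
  qed simp
  have KiP: "integrable (?MF \<Otimes>\<^sub>M ?N) K"
    using integrable_distr_eq[OF pm Km] Ki joint by simp
  have "AE \<omega> in ?MF. integrable ?N (\<lambda>x. K (\<omega>, x))" by (rule P.AE_integrable_fst'[OF KiP])
  then show "AE \<omega> in M. integrable ?N (\<lambda>x. K (\<omega>, x))" by (rule AE_distrD[OF idm])
  define Phi where "Phi \<omega> = (\<integral>x. K (\<omega>, x) \<partial>?N)" for \<omega>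
  have Km': "K \<in> borel_measurable (F \<Otimes>\<^sub>M ?N)"
    using Km by (simp cong: measurable_cong_sets)
  have Phim: "Phi \<in> borel_measurable F"
    unfolding Phi_def by (rule N.borel_measurable_lebesgue_integral) (simp add: Km')
  have PhiMF: "integrable ?MF Phi" unfolding Phi_def by (rule P.integrable_fst'[OF KiP])
  have PhiM: "integrable M Phi" using PhiMF integrable_distr_eq[OF idm Phim] by simp
  have SF: "sigma_finite_subalgebra M F"
    by (rule finite_measure_subalgebra_is_sigma_finite)
       (simp add: finite_measure_subalgebra_def finite_measure_subalgebra_axioms_def sub finite_measure_axioms)
  interpret SF: sigma_finite_subalgebra M F by (rule SF)
  show "AE \<omega> in M. real_cond_exp M F (\<lambda>\<omega>. K (\<omega>, X \<omega>)) \<omega> = (\<integral>x. K (\<omega>, x) \<partial>distr M S X)"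
    unfolding Phi_def[symmetric]
  proof (rule SF.real_cond_exp_charact)
    fix A assume A: "A \<in> sets F"
    have Am: "(\<lambda>p. indicator A (fst p) * K p) \<in> borel_measurable (F \<Otimes>\<^sub>M S)"
      using A Km by measurable
    have Ai: "integrable (?MF \<Otimes>\<^sub>M ?N) (\<lambda>p. indicator A (fst p) * K p)"
      by (rule Bochner_Integration.integrable_bound[OF KiP]) (use Am in \<open>auto simp: indicator_def cong: measurable_cong_sets\<close>)
    have "(\<integral>\<omega>\<in>A. K (\<omega>, X \<omega>) \<partial>M) = (\<integral>\<omega>. indicator A (fst (\<omega>, X \<omega>)) * K (\<omega>, X \<omega>) \<partial>M)"
      by (simp add: set_lebesgue_integral_def)
    also have "\<dots> = (\<integral>p. indicator A (fst p) * K p \<partial>(?MF \<Otimes>\<^sub>M ?N))"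
      using integral_distr[OF pm Am] joint by simp
    also have "\<dots> = (\<integral>\<omega>. (\<integral>x. indicator A (fst (\<omega>,x)) * K (\<omega>,x) \<partial>?N) \<partial>?MF)"
      by (rule P.integral_fst'[OF Ai, symmetric])
    also have "\<dots> = (\<integral>\<omega>. indicator A \<omega> * Phi \<omega> \<partial>?MF)"
      by (simp add: Phi_def)
    also have "\<dots> = (\<integral>\<omega>. indicator A \<omega> * Phi \<omega> \<partial>M)"
      by (rule integral_distr[OF idm]) (use A Phim in measurable)
    also have "\<dots> = (\<integral>\<omega>\<in>A. Phi \<omega> \<partial>M)" by (simp add: set_lebesgue_integral_def)
    finally show "(\<integral>\<omega>\<in>A. K (\<omega>, X \<omega>) \<partial>M) = (\<integral>\<omega>\<in>A. Phi \<omega> \<partial>M)" .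
  qed (use Ki PhiM Phim in auto)
qed

lemma ennreal_enn2real_le': "ennreal (enn2real c) \<le> c"
  by (cases c) auto

lemma (in sigma_finite_subalgebra) int_from_prop:
  fixes g h :: "'a \<Rightarrow> real"
  assumes gm: "g \<in> borel_measurable M" and g0: "\<And>x. 0 \<le> g x" and dpos: "0 < d"
    and ce: "AE x in M. d \<le> real_cond_exp M F g x"
    and hm: "h \<in> borel_measurable F" and h0: "\<And>x. 0 \<le> h x" and hi: "integrable M (\<lambda>x. h x * g x)"
  shows "integrable M h"
proof -
  have "(\<lambda>x. ennreal (- g x)) = (\<lambda>x. 0)" using g0 by (simp add: ennreal_neg)
  moreover have "AE x in M. nn_cond_exp M F (\<lambda>x. 0) x = 0"
    using nn_cond_exp_F_meas[of "\<lambda>x. 0"] by (auto elim: eventually_mono)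
  ultimately have z: "AE x in M. nn_cond_exp M F (\<lambda>x. ennreal (- g x)) x = 0" by simp
  have lb: "AE x in M. ennreal d \<le> nn_cond_exp M F (\<lambda>x. ennreal (g x)) x"
    using z ce
  proof eventually_elim
    case (elim x)
    then have "d \<le> enn2real (nn_cond_exp M F (\<lambda>x. ennreal (g x)) x)"
      by (simp add: real_cond_exp_def)
    then have "ennreal d \<le> ennreal (enn2real (nn_cond_exp M F (\<lambda>x. ennreal (g x)) x))"
      by (rule ennreal_leI)
    also have "\<dots> \<le> nn_cond_exp M F (\<lambda>x. ennreal (g x)) x" by (rule ennreal_enn2real_le')
    finally show ?case .
  qed
  have hM: "h \<in> borel_measurable M" by (rule measurable_from_subalg[OF subalg hm])
  have "ennreal d * (\<integral>\<^sup>+x. ennreal (h x) \<partial>M) = (\<integral>\<^sup>+x. ennreal d * ennreal (h x) \<partial>M)"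
    using hM by (simp add: nn_integral_cmult)
  also have "\<dots> \<le> (\<integral>\<^sup>+x. ennreal (h x) * nn_cond_exp M F (\<lambda>x. ennreal (g x)) x \<partial>M)"
    using lb by (intro nn_integral_mono_AE) (auto elim!: eventually_mono simp: mult.commute[of "ennreal d"] intro: mult_left_mono)
  also have "\<dots> = (\<integral>\<^sup>+x. ennreal (h x) * ennreal (g x) \<partial>M)"
    by (rule nn_cond_exp_intg) (use hm gm in auto)
  also have "\<dots> = (\<integral>\<^sup>+x. ennreal (norm (h x * g x)) \<partial>M)"
    using h0 g0 by (simp add: ennreal_mult)
  also have "\<dots> < \<infinity>" using hi by (simp add: integrable_iff_bounded)
  finally have "ennreal d * (\<integral>\<^sup>+x. ennreal (h x) \<partial>M) < \<infinity>" .
  then have "(\<integral>\<^sup>+x. ennreal (h x) \<partial>M) < \<infinity>"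
    using dpos by (auto simp: ennreal_mult_less_top top.not_eq_extremum)
  then show ?thesis
    using hM h0 by (intro integrableI_bounded) auto
qed

lemma pw_ineq:
  fixes p1 p0 q1 q0 th d :: real
  assumes d: "0 < d"
  shows "\<bar>(p1 - p0 - th)\<^sup>2 - (q1 - q0 - th)\<^sup>2\<bar>
     \<le> 2 * (1 + 1/d) * ((p1 - q1)\<^sup>2 + (p0 - q0)\<^sup>2) + d * (q1 - q0 - th)\<^sup>2"
proof -
  define E where "E = (p1 - q1) - (p0 - q0)"
  define g where "g = q1 - q0 - th"
  have eq: "(p1 - p0 - th)\<^sup>2 - (q1 - q0 - th)\<^sup>2 = E\<^sup>2 + 2 * E * g"
    unfolding E_def g_def by (simp add: power2_eq_square algebra_simps)
  have E2: "E\<^sup>2 \<le> 2 * ((p1 - q1)\<^sup>2 + (p0 - q0)\<^sup>2)"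
  proof -
    have "2 * ((p1 - q1)\<^sup>2 + (p0 - q0)\<^sup>2) - E\<^sup>2 = ((p1 - q1) + (p0 - q0))\<^sup>2"
      unfolding E_def by (simp add: power2_eq_square algebra_simps)
    moreover have "0 \<le> ((p1 - q1) + (p0 - q0))\<^sup>2" by simp
    ultimately show ?thesis by linarith
  qed
  have am: "2 * \<bar>E * g\<bar> \<le> E\<^sup>2 / d + d * g\<^sup>2"
  proof -
    have "0 \<le> (\<bar>E\<bar> / sqrt d - sqrt d * \<bar>g\<bar>)\<^sup>2" by simp
    also have "\<dots> = E\<^sup>2 / d + d * g\<^sup>2 - 2 * \<bar>E * g\<bar>"
      using d by (simp add: power2_eq_square field_simps abs_mult)
    finally show ?thesis by simp
  qed
  have "\<bar>E\<^sup>2 + 2 * E * g\<bar> \<le> \<bar>E\<^sup>2\<bar> + \<bar>2 * E * g\<bar>" by (rule abs_triangle_ineq)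
  also have "\<dots> = E\<^sup>2 + 2 * \<bar>E * g\<bar>" by (simp add: abs_mult)
  also have "\<dots> \<le> E\<^sup>2 * (1 + 1/d) + d * g\<^sup>2" using am by (simp add: field_simps)
  also have "\<dots> \<le> 2 * ((p1 - q1)\<^sup>2 + (p0 - q0)\<^sup>2) * (1 + 1/d) + d * g\<^sup>2"
    using E2 d by (intro add_right_mono mult_right_mono) auto
  finally show ?thesis unfolding eq g_def by (simp add: algebra_simps)
qed

lemma sqi_add:
  fixes u w :: "'a \<Rightarrow> real"
  assumes [measurable]: "u \<in> borel_measurable M" "w \<in> borel_measurable M"
    and iu: "integrable M (\<lambda>x. (u x)\<^sup>2)" and iw: "integrable M (\<lambda>x. (w x)\<^sup>2)"
  shows "integrable M (\<lambda>x. (u x + w x)\<^sup>2)"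
proof (rule Bochner_Integration.integrable_bound[where f="\<lambda>x. 2 * (u x)\<^sup>2 + 2 * (w x)\<^sup>2"])
  show "integrable M (\<lambda>x. 2 * (u x)\<^sup>2 + 2 * (w x)\<^sup>2)" using iu iw by auto
  show "(\<lambda>x. (u x + w x)\<^sup>2) \<in> borel_measurable M" by measurable
  show "AE x in M. norm ((u x + w x)\<^sup>2) \<le> norm (2 * (u x)\<^sup>2 + 2 * (w x)\<^sup>2)"
  proof (rule AE_I2)
    fix x
    have "2 * (u x)\<^sup>2 + 2 * (w x)\<^sup>2 - (u x + w x)\<^sup>2 = (u x - w x)\<^sup>2"
      by (simp add: power2_eq_square algebra_simps)
    moreover have "0 \<le> (u x - w x)\<^sup>2" by simp
    ultimately have "(u x + w x)\<^sup>2 \<le> 2 * (u x)\<^sup>2 + 2 * (w x)\<^sup>2" by linarith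
    then show "norm ((u x + w x)\<^sup>2) \<le> norm (2 * (u x)\<^sup>2 + 2 * (w x)\<^sup>2)" by simp
  qed
qed

lemma sqi_diff:
  fixes u w :: "'a \<Rightarrow> real"
  assumes [measurable]: "u \<in> borel_measurable M" "w \<in> borel_measurable M"
    and iu: "integrable M (\<lambda>x. (u x)\<^sup>2)" and iw: "integrable M (\<lambda>x. (w x)\<^sup>2)"
  shows "integrable M (\<lambda>x. (u x - w x)\<^sup>2)"
  using sqi_add[of u M "\<lambda>x. - w x"] iu iw by simp

lemma sqi_mult:
  fixes u w :: "'a \<Rightarrow> real"
  assumes [measurable]: "u \<in> borel_measurable M" "w \<in> borel_measurable M"
    and iu: "integrable M (\<lambda>x. (u x)\<^sup>2)" and iw: "integrable M (\<lambda>x. (w x)\<^sup>2)"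
  shows "integrable M (\<lambda>x. u x * w x)"
proof (rule Bochner_Integration.integrable_bound[where f="\<lambda>x. (u x)\<^sup>2 + (w x)\<^sup>2"])
  show "integrable M (\<lambda>x. (u x)\<^sup>2 + (w x)\<^sup>2)" using iu iw by auto
  show "(\<lambda>x. u x * w x) \<in> borel_measurable M" by measurable
  show "AE x in M. norm (u x * w x) \<le> norm ((u x)\<^sup>2 + (w x)\<^sup>2)"
  proof (rule AE_I2)
    fix x
    have "(u x)\<^sup>2 + (w x)\<^sup>2 - 2 * \<bar>u x * w x\<bar> = (\<bar>u x\<bar> - \<bar>w x\<bar>)\<^sup>2"
      by (simp add: power2_eq_square algebra_simps abs_mult)
    moreover have "0 \<le> (\<bar>u x\<bar> - \<bar>w x\<bar>)\<^sup>2" by simp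
    moreover have "0 \<le> \<bar>u x * w x\<bar>" by simp
    ultimately have "\<bar>u x * w x\<bar> \<le> (u x)\<^sup>2 + (w x)\<^sup>2" by linarith
    then show "norm (u x * w x) \<le> norm ((u x)\<^sup>2 + (w x)\<^sup>2)" by simp
  qed
qed

lemma (in prob_space) int_bound:
  fixes p1 p0 q1 q0 :: "'a \<Rightarrow> real"
  assumes [measurable]: "p1 \<in> borel_measurable M" "p0 \<in> borel_measurable M"
    "q1 \<in> borel_measurable M" "q0 \<in> borel_measurable M"
    and ip1: "integrable M (\<lambda>x. (p1 x)\<^sup>2)" and ip0: "integrable M (\<lambda>x. (p0 x)\<^sup>2)"
    and iq1: "integrable M (\<lambda>x. (q1 x)\<^sup>2)" and iq0: "integrable M (\<lambda>x. (q0 x)\<^sup>2)"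
    and d: "0 < d"
  shows "\<bar>\<integral>x. (p1 x - p0 x - th)\<^sup>2 - (q1 x - q0 x - th)\<^sup>2 \<partial>M\<bar>
     \<le> 2 * (1 + 1/d) * ((\<integral>x. (p1 x - q1 x)\<^sup>2 \<partial>M) + (\<integral>x. (p0 x - q0 x)\<^sup>2 \<partial>M))
        + d * (\<integral>x. (q1 x - q0 x - th)\<^sup>2 \<partial>M)"
proof -
  have ic: "integrable M (\<lambda>x. (th)\<^sup>2)" by simp
  have i1: "integrable M (\<lambda>x. (p1 x - p0 x)\<^sup>2)" by (rule sqi_diff) (use ip1 ip0 in auto)
  have i2: "integrable M (\<lambda>x. (p1 x - p0 x - th)\<^sup>2)"
    by (rule sqi_diff[where w="\<lambda>x. th"]) (use i1 ic in auto)
  have i3: "integrable M (\<lambda>x. (q1 x - q0 x)\<^sup>2)" by (rule sqi_diff) (use iq1 iq0 in auto)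
  have i4: "integrable M (\<lambda>x. (q1 x - q0 x - th)\<^sup>2)"
    by (rule sqi_diff[where w="\<lambda>x. th"]) (use i3 ic in auto)
  have i5: "integrable M (\<lambda>x. (p1 x - q1 x)\<^sup>2)" by (rule sqi_diff) (use ip1 iq1 in auto)
  have i6: "integrable M (\<lambda>x. (p0 x - q0 x)\<^sup>2)" by (rule sqi_diff) (use ip0 iq0 in auto)
  have ih: "integrable M (\<lambda>x. (p1 x - p0 x - th)\<^sup>2 - (q1 x - q0 x - th)\<^sup>2)"
    using i2 i4 by auto
  have iR: "integrable M (\<lambda>x. 2 * (1 + 1/d) * ((p1 x - q1 x)\<^sup>2 + (p0 x - q0 x)\<^sup>2) + d * (q1 x - q0 x - th)\<^sup>2)"
    using i4 i5 i6 by auto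
  have "\<bar>\<integral>x. (p1 x - p0 x - th)\<^sup>2 - (q1 x - q0 x - th)\<^sup>2 \<partial>M\<bar>
      \<le> (\<integral>x. \<bar>(p1 x - p0 x - th)\<^sup>2 - (q1 x - q0 x - th)\<^sup>2\<bar> \<partial>M)"
    by (rule integral_abs_bound)
  also have "\<dots> \<le> (\<integral>x. 2 * (1 + 1/d) * ((p1 x - q1 x)\<^sup>2 + (p0 x - q0 x)\<^sup>2) + d * (q1 x - q0 x - th)\<^sup>2 \<partial>M)"
    by (rule integral_mono) (use ih iR pw_ineq[OF d] in auto)
  also have "\<dots> = 2 * (1 + 1/d) * ((\<integral>x. (p1 x - q1 x)\<^sup>2 \<partial>M) + (\<integral>x. (p0 x - q0 x)\<^sup>2 \<partial>M))
        + d * (\<integral>x. (q1 x - q0 x - th)\<^sup>2 \<partial>M)"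
    using i4 i5 i6 by simp
  finally show ?thesis .
qed

lemma (in prob_space) comb_int:
  fixes p1 p0 q1 q0 :: "'a \<Rightarrow> real"
  assumes [measurable]: "p1 \<in> borel_measurable M" "p0 \<in> borel_measurable M"
    "q1 \<in> borel_measurable M" "q0 \<in> borel_measurable M"
    and ip1: "integrable M (\<lambda>x. (p1 x)\<^sup>2)" and ip0: "integrable M (\<lambda>x. (p0 x)\<^sup>2)"
    and iq1: "integrable M (\<lambda>x. (q1 x)\<^sup>2)" and iq0: "integrable M (\<lambda>x. (q0 x)\<^sup>2)"
  shows "integrable M (\<lambda>x. (p1 x - p0 x - th)\<^sup>2 - (q1 x - q0 x - th)\<^sup>2)"
proof -
  have ic: "integrable M (\<lambda>x. (th)\<^sup>2)" by simp
  have i1: "integrable M (\<lambda>x. (p1 x - p0 x)\<^sup>2)" by (rule sqi_diff) (use ip1 ip0 in auto)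
  have i2: "integrable M (\<lambda>x. (p1 x - p0 x - th)\<^sup>2)"
    by (rule sqi_diff[where w="\<lambda>x. th"]) (use i1 ic in auto)
  have i3: "integrable M (\<lambda>x. (q1 x - q0 x)\<^sup>2)" by (rule sqi_diff) (use iq1 iq0 in auto)
  have i4: "integrable M (\<lambda>x. (q1 x - q0 x - th)\<^sup>2)"
    by (rule sqi_diff[where w="\<lambda>x. th"]) (use i3 ic in auto)
  show ?thesis using i2 i4 by auto
qed

theorem lemma3:
  fixes M :: "'w measure" and SX :: "'x measure"
    and X :: "nat \<Rightarrow> 'w \<Rightarrow> 'x" and Y0 Y1 :: "nat \<Rightarrow> 'w \<Rightarrow> real"
    and A :: "nat \<Rightarrow> 'w \<Rightarrow> bool"
    and pitil :: "nat \<Rightarrow> 'w \<Rightarrow> 'x \<Rightarrow> real" and k :: "nat \<Rightarrow> real"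
    and fhat :: "nat \<Rightarrow> 'w \<Rightarrow> bool \<Rightarrow> 'x \<Rightarrow> real"
    and f :: "bool \<Rightarrow> 'x \<Rightarrow> real" and v :: "bool \<Rightarrow> 'x \<Rightarrow> ennreal"
    and pol :: "'x \<Rightarrow> real" and C1 :: real and theta0 :: real
  defines "Y \<equiv> obs_outcome A Y0 Y1"
    and "Ya \<equiv> (\<lambda>a t. if a then Y1 t else Y0 t)"
    and "pit \<equiv> (\<lambda>t \<omega> x. trunc (k t) (pitil t \<omega> x))"
    and "Om \<equiv> history M SX X A (obs_outcome A Y0 Y1)"
    and "PX \<equiv> distr M SX (X 1)"
  assumes P: "prob_space M"
    and X_meas: "\<forall>t. X t \<in> M \<rightarrow>\<^sub>M SX"
    and Y0_meas: "\<forall>t. Y0 t \<in> borel_measurable M"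
    and Y1_meas: "\<forall>t. Y1 t \<in> borel_measurable M"
    and A_meas: "\<forall>t. A t \<in> M \<rightarrow>\<^sub>M count_space UNIV"
    and iid_indep: "prob_space.indep_vars M (\<lambda>_. SX \<Otimes>\<^sub>M borel \<Otimes>\<^sub>M borel) (tuple X Y0 Y1) {1..}"
    and iid_dist: "\<forall>t\<ge>1. distr M (SX \<Otimes>\<^sub>M borel \<Otimes>\<^sub>M borel) (tuple X Y0 Y1 t)
                        = distr M (SX \<Otimes>\<^sub>M borel \<Otimes>\<^sub>M borel) (tuple X Y0 Y1 1)"
    and fresh: "\<forall>t\<ge>1. prob_space.indep_set M (sets (Om (t - 1)))
                   (sets (vimage_algebra (space M) (tuple X Y0 Y1 t) (SX \<Otimes>\<^sub>M borel \<Otimes>\<^sub>M borel)))"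
    and k_ge: "\<forall>t. 2 \<le> k t"
    and pitil_range: "\<forall>t \<omega> x. 0 < pitil t \<omega> x \<and> pitil t \<omega> x < 1"
    and pitil_meas: "\<forall>t\<ge>1. (\<lambda>(\<omega>, x). pitil t \<omega> x) \<in> borel_measurable (Om (t - 1) \<Otimes>\<^sub>M SX)"
    and assignment: "\<forall>t\<ge>1. AE \<omega> in M.
          real_cond_exp M (pre_treatment M SX X Y0 Y1 A t) (\<lambda>\<omega>. if A t \<omega> then 1 else 0) \<omega>
            = pit t \<omega> (X t \<omega>)"
    and f_meas: "\<forall>a. f a \<in> borel_measurable SX"
    and f_def: "\<forall>t\<ge>1. \<forall>a. AE \<omega> in M.
          real_cond_exp M (vimage_algebra (space M) (X t) SX) (Ya a t) \<omega> = f a (X t \<omega>)"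
    and v_meas: "\<forall>a. v a \<in> borel_measurable SX"
    and v_def: "\<forall>t\<ge>1. \<forall>a. AE \<omega> in M.
          nn_cond_exp M (vimage_algebra (space M) (X t) SX)
             (\<lambda>\<omega>. ennreal ((Ya a t \<omega> - f a (X t \<omega>))\<^sup>2)) \<omega> = v a (X t \<omega>)"
    and theta0_def: "theta0 = (\<integral>\<omega>. Y1 1 \<omega> - Y0 1 \<omega> \<partial>M)"
    and fhat_meas: "\<forall>t a. (\<lambda>(\<omega>, x). fhat t \<omega> a x) \<in> borel_measurable (Om t \<Otimes>\<^sub>M SX)"
    and var_Y: "\<forall>t\<ge>1. integrable M (\<lambda>\<omega>. (Y t \<omega>)\<^sup>2)"
    and v_finite: "\<forall>a x. v a x < \<infinity>"
    and fhat_rate: "\<forall>a. op1 M (\<lambda>t \<omega>. k t * L2dist PX (fhat t \<omega> a) (f a))"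
    and pol_meas: "pol \<in> borel_measurable SX"
    and pol_range: "\<forall>x. 0 < pol x \<and> pol x < 1"
    and pi_rate: "op1 M (\<lambda>t \<omega>. k t * L2dist PX (pit t \<omega>) pol)"
    and aipw_bound: "\<forall>a x. 0 < pi_aipw v a x \<and> 1 / pi_aipw v a x < C1"
    and var_fhat: "\<forall>t\<ge>1. \<forall>a. integrable M (\<lambda>\<omega>. (fhat (t - 1) \<omega> a (X t \<omega>))\<^sup>2)"
  shows "op1 M (\<lambda>n \<omega>. real_cond_exp M (Om n)
           (\<lambda>\<omega>. (fhat n \<omega> True (X (Suc n) \<omega>) - fhat n \<omega> False (X (Suc n) \<omega>) - theta0)\<^sup>2
               - (f True (X (Suc n) \<omega>) - f False (X (Suc n) \<omega>) - theta0)\<^sup>2) \<omega>)"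
proof -
  interpret prob_space M by (rule P)
  have Xm[measurable]: "\<And>t. X t \<in> M \<rightarrow>\<^sub>M SX" using X_meas by auto
  have Y0m[measurable]: "\<And>t. Y0 t \<in> borel_measurable M" using Y0_meas by auto
  have Y1m[measurable]: "\<And>t. Y1 t \<in> borel_measurable M" using Y1_meas by auto
  have Am[measurable]: "\<And>t. A t \<in> M \<rightarrow>\<^sub>M count_space UNIV" using A_meas by auto
  have fm[measurable]: "\<And>a. f a \<in> borel_measurable SX" using f_meas by auto
  have obs_eq: "\<And>t. obs_outcome A Y0 Y1 t = (\<lambda>\<omega>. if A t \<omega> then Y1 t \<omega> else Y0 t \<omega>)"
    by (simp add: fun_eq_iff obs_outcome_def)
  have Ym[measurable]: "\<And>t. obs_outcome A Y0 Y1 t \<in> borel_measurable M"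
    unfolding obs_eq by measurable
  have tm[measurable]: "\<And>t. tuple X Y0 Y1 t \<in> M \<rightarrow>\<^sub>M SX \<Otimes>\<^sub>M borel \<Otimes>\<^sub>M borel"
    unfolding tuple_def by measurable
  have Om_sets: "\<And>n. sets (Om n) \<subseteq> sets M \<and> space (Om n) = space M"
  proof -
    fix n
    let ?G = "(\<Union>s\<in>{1..n}. {(\<lambda>\<omega>. (X s \<omega>, A s \<omega>, obs_outcome A Y0 Y1 s \<omega>)) -` B \<inter> space M | B.
        B \<in> sets (SX \<Otimes>\<^sub>M count_space UNIV \<Otimes>\<^sub>M borel)})"
    have G: "?G \<subseteq> sets M"
    proof safe
      fix s and B :: "('x \<times> bool \<times> real) set" assume "B \<in> sets (SX \<Otimes>\<^sub>M count_space UNIV \<Otimes>\<^sub>M borel)"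
      moreover have "(\<lambda>\<omega>. (X s \<omega>, A s \<omega>, obs_outcome A Y0 Y1 s \<omega>)) \<in> M \<rightarrow>\<^sub>M SX \<Otimes>\<^sub>M count_space UNIV \<Otimes>\<^sub>M borel"
        by measurable
      ultimately show "(\<lambda>\<omega>. (X s \<omega>, A s \<omega>, obs_outcome A Y0 Y1 s \<omega>)) -` B \<inter> space M \<in> sets M"
        by (rule measurable_sets[rotated])
    qed
    then have GP: "?G \<subseteq> Pow (space M)" using sets.sets_into_space by blast
    have "sets (Om n) = sigma_sets (space M) ?G"
      unfolding Om_def history_def using GP by (simp add: sets_measure_of)
    moreover have "sigma_sets (space M) ?G \<subseteq> sets M" by (rule sets.sigma_sets_subset[OF G])
    moreover have "space (Om n) = space M"
      unfolding Om_def history_def using GP by (simp add: space_measure_of_conv)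
    ultimately show "sets (Om n) \<subseteq> sets M \<and> space (Om n) = space M" by simp
  qed
  have Om_sub: "\<And>n. subalgebra M (Om n)" using Om_sets by (simp add: subalgebra_def)
  have fst_t: "\<And>t. distr (distr M (SX \<Otimes>\<^sub>M borel \<Otimes>\<^sub>M borel) (tuple X Y0 Y1 t)) SX fst = distr M SX (X t)"
  proof -
    fix t
    have "distr (distr M (SX \<Otimes>\<^sub>M borel \<Otimes>\<^sub>M borel) (tuple X Y0 Y1 t)) SX fst = distr M SX (fst \<circ> tuple X Y0 Y1 t)"
      by (rule distr_distr) (simp_all add: tm)
    also have "fst \<circ> tuple X Y0 Y1 t = X t" by (simp add: fun_eq_iff tuple_def)
    finally show "distr (distr M (SX \<Otimes>\<^sub>M borel \<Otimes>\<^sub>M borel) (tuple X Y0 Y1 t)) SX fst = distr M SX (X t)" .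
  qed
  have PXt: "\<And>t. 1 \<le> t \<Longrightarrow> distr M SX (X t) = PX"
  proof -
    fix t :: nat assume t: "1 \<le> t"
    have "distr M SX (X t) = distr (distr M (SX \<Otimes>\<^sub>M borel \<Otimes>\<^sub>M borel) (tuple X Y0 Y1 t)) SX fst"
      by (rule fst_t[symmetric])
    also have "\<dots> = distr (distr M (SX \<Otimes>\<^sub>M borel \<Otimes>\<^sub>M borel) (tuple X Y0 Y1 1)) SX fst"
      by (simp only: iid_dist[rule_format, OF t])
    also have "\<dots> = PX" unfolding PX_def by (rule fst_t)
    finally show "distr M SX (X t) = PX" .
  qed
  interpret PXp: prob_space PX unfolding PX_def by (rule prob_space_distr) simp
  have kpos: "\<And>t. 0 < k t" proof - fix t show "0 < k t" using k_ge[rule_format, of t] by linarith qed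
  have trb: "\<And>t p. 1 / k t \<le> trunc (k t) p \<and> trunc (k t) p \<le> 1 - 1 / k t"
  proof -
    fix t p
    have "1 / k t \<le> 1 / 2" using k_ge[rule_format, of t] kpos[of t] by (simp add: field_simps)
    then have "1 / k t \<le> 1 - 1 / k t" by simp
    then show "1 / k t \<le> trunc (k t) p \<and> trunc (k t) p \<le> 1 - 1 / k t"
      by (auto simp: trunc_def)
  qed
  let ?Pre = "pre_treatment M SX X Y0 Y1 A 1"
  let ?Gen = "sets (history M SX X A (obs_outcome A Y0 Y1) (1 - 1)) \<union>
      {tuple X Y0 Y1 1 -` B \<inter> space M | B. B \<in> sets (SX \<Otimes>\<^sub>M borel \<Otimes>\<^sub>M borel)}"
  have Gen: "?Gen \<subseteq> sets M"
  proof -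
    have "sets (history M SX X A (obs_outcome A Y0 Y1) (1 - 1)) \<subseteq> sets M"
      using Om_sets[of 0] by (simp add: Om_def)
    moreover have "{tuple X Y0 Y1 1 -` B \<inter> space M | B. B \<in> sets (SX \<Otimes>\<^sub>M borel \<Otimes>\<^sub>M borel)} \<subseteq> sets M"
      using measurable_sets[OF tm] by blast
    ultimately show ?thesis by blast
  qed
  then have GenP: "?Gen \<subseteq> Pow (space M)" using sets.sets_into_space by blast
  have sets_Pre: "sets ?Pre = sigma_sets (space M) ?Gen"
    unfolding pre_treatment_def using GenP by (simp add: sets_measure_of)
  have Pre_sub: "subalgebra M ?Pre"
    unfolding subalgebra_def
    using sets_Pre sets.sigma_sets_subset[OF Gen] GenP
    by (simp add: pre_treatment_def space_measure_of_conv)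
  interpret SFP: sigma_finite_subalgebra M ?Pre
    by (rule finite_measure_subalgebra_is_sigma_finite)
       (intro finite_measure_subalgebra.intro finite_measure_subalgebra_axioms.intro Pre_sub finite_measure_axioms)
  have tuple_pre: "\<And>B. B \<in> sets (SX \<Otimes>\<^sub>M borel \<Otimes>\<^sub>M borel) \<Longrightarrow> tuple X Y0 Y1 1 -` B \<inter> space M \<in> sets ?Pre"
    unfolding sets_Pre by (rule sigma_sets.Basic) blast
  have Y1pre: "Y1 1 \<in> borel_measurable ?Pre"
  proof (rule measurableI)
    fix B :: "real set" assume B: "B \<in> sets borel"
    have "Y1 1 -` B \<inter> space ?Pre = tuple X Y0 Y1 1 -` (space SX \<times> UNIV \<times> B) \<inter> space M"
      using Pre_sub measurable_space[OF Xm[of 1]] by (auto simp: subalgebra_def tuple_def)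
    also have "\<dots> \<in> sets ?Pre" using B by (intro tuple_pre pair_measureI) auto
    finally show "Y1 1 -` B \<inter> space ?Pre \<in> sets ?Pre" .
  qed simp
  have Y0pre: "Y0 1 \<in> borel_measurable ?Pre"
  proof (rule measurableI)
    fix B :: "real set" assume B: "B \<in> sets borel"
    have "Y0 1 -` B \<inter> space ?Pre = tuple X Y0 Y1 1 -` (space SX \<times> B \<times> UNIV) \<inter> space M"
      using Pre_sub measurable_space[OF Xm[of 1]] by (auto simp: subalgebra_def tuple_def)
    also have "\<dots> \<in> sets ?Pre" using B by (intro tuple_pre pair_measureI) auto
    finally show "Y0 1 -` B \<inter> space ?Pre \<in> sets ?Pre" .
  qed simp
  have asg1: "AE \<omega> in M. real_cond_exp M ?Pre (\<lambda>\<omega>. if A 1 \<omega> then 1 else 0) \<omega> = pit 1 \<omega> (X 1 \<omega>)"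
    using assignment[rule_format, of 1] by simp
  have iY2: "integrable M (\<lambda>\<omega>. (obs_outcome A Y0 Y1 1 \<omega>)\<^sup>2)" using var_Y[rule_format, of 1] unfolding Y_def by simp
  have Y1sq: "integrable M (\<lambda>\<omega>. (Y1 1 \<omega>)\<^sup>2)"
  proof (rule SFP.int_from_prop[where g="\<lambda>\<omega>. if A 1 \<omega> then 1 else 0" and d="1 / k 1"])
    show "AE \<omega> in M. 1 / k 1 \<le> real_cond_exp M ?Pre (\<lambda>\<omega>. if A 1 \<omega> then 1 else 0) \<omega>"
      using asg1 by (auto elim!: eventually_mono simp: pit_def trb)
    show "(\<lambda>\<omega>. (Y1 1 \<omega>)\<^sup>2) \<in> borel_measurable ?Pre" using Y1pre by measurable
    show "integrable M (\<lambda>\<omega>. (Y1 1 \<omega>)\<^sup>2 * (if A 1 \<omega> then 1 else 0))"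
      by (rule Bochner_Integration.integrable_bound[OF iY2]) (auto simp: obs_outcome_def)
  qed (use kpos in auto)
  have trb2: "\<And>\<omega> x. 1 / k 1 \<le> 1 - pit 1 \<omega> x"
  proof - fix \<omega> x show "1 / k 1 \<le> 1 - pit 1 \<omega> x" using trb[of 1 "pitil 1 \<omega> x"] unfolding pit_def by linarith qed
  have iA: "integrable M (\<lambda>\<omega>. if A 1 \<omega> then 1 else (0::real))"
    by (rule integrable_const_bound[where B=1]) auto
  have Y0sq: "integrable M (\<lambda>\<omega>. (Y0 1 \<omega>)\<^sup>2)"
  proof (rule SFP.int_from_prop[where g="\<lambda>\<omega>. 1 - (if A 1 \<omega> then 1 else 0)" and d="1 / k 1"])
    have "AE \<omega> in M. real_cond_exp M ?Pre (\<lambda>\<omega>. 1 - (if A 1 \<omega> then 1 else 0)) \<omega>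
        = real_cond_exp M ?Pre (\<lambda>\<omega>. 1) \<omega> - real_cond_exp M ?Pre (\<lambda>\<omega>. if A 1 \<omega> then 1 else 0) \<omega>"
      by (rule SFP.real_cond_exp_diff) (use iA in auto)
    moreover have "AE \<omega> in M. real_cond_exp M ?Pre (\<lambda>\<omega>. 1) \<omega> = 1"
      by (rule SFP.real_cond_exp_F_meas) auto
    ultimately show "AE \<omega> in M. 1 / k 1 \<le> real_cond_exp M ?Pre (\<lambda>\<omega>. 1 - (if A 1 \<omega> then 1 else 0)) \<omega>"
      using asg1 by eventually_elim (use trb2 in auto)
    show "(\<lambda>\<omega>. (Y0 1 \<omega>)\<^sup>2) \<in> borel_measurable ?Pre" using Y0pre by measurable
    show "integrable M (\<lambda>\<omega>. (Y0 1 \<omega>)\<^sup>2 * (1 - (if A 1 \<omega> then 1 else 0)))"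
      by (rule Bochner_Integration.integrable_bound[OF iY2]) (auto simp: obs_outcome_def)
  qed (use kpos in auto)
  have Yasq: "\<And>a. integrable M (\<lambda>\<omega>. (Ya a 1 \<omega>)\<^sup>2)"
    using Y1sq Y0sq by (simp add: Ya_def)
  have Yam[measurable]: "\<And>a t. Ya a t \<in> borel_measurable M" by (simp add: Ya_def)
  have fL2M: "\<And>a. integrable M (\<lambda>\<omega>. (f a (X 1 \<omega>))\<^sup>2)"
  proof -
    fix a
    let ?V = "vimage_algebra (space M) (X 1) SX"
    have V_sub: "subalgebra M ?V"
      unfolding subalgebra_def using measurable_space[OF Xm[of 1]] measurable_sets[OF Xm[of 1]]
      by (auto simp: sets_vimage_algebra2 Pi_iff)
    interpret SFV: sigma_finite_subalgebra M ?V
      by (rule finite_measure_subalgebra_is_sigma_finite)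
         (intro finite_measure_subalgebra.intro finite_measure_subalgebra_axioms.intro V_sub finite_measure_axioms)
    have iYa: "integrable M (Ya a 1)"
      using sqi_mult[of "Ya a 1" M "\<lambda>_. 1"] Yasq by simp
    have ic: "integrable M (\<lambda>\<omega>. (real_cond_exp M ?V (Ya a 1) \<omega>)\<^sup>2)"
      by (rule SFV.integrable_convex_cond_exp[where I=UNIV and q="\<lambda>y. y\<^sup>2"])
         (use iYa Yasq convex_power2 in auto)
    have ae: "AE \<omega> in M. real_cond_exp M ?V (Ya a 1) \<omega> = f a (X 1 \<omega>)"
      using f_def[rule_format, of 1 a] by simp
    have "integrable M (\<lambda>\<omega>. (real_cond_exp M ?V (Ya a 1) \<omega>)\<^sup>2) = integrable M (\<lambda>\<omega>. (f a (X 1 \<omega>))\<^sup>2)"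
      by (rule integrable_cong_AE) (use ae in \<open>auto elim: eventually_mono\<close>)
    then show "integrable M (\<lambda>\<omega>. (f a (X 1 \<omega>))\<^sup>2)" using ic by simp
  qed
  have fL2: "\<And>a. integrable PX (\<lambda>x. (f a x)\<^sup>2)"
    unfolding PX_def using fL2M by (subst integrable_distr_eq) auto
  have fhm[measurable]: "\<And>n a. (\<lambda>p. fhat n (fst p) a (snd p)) \<in> borel_measurable (Om n \<Otimes>\<^sub>M SX)"
  proof -
    fix n a
    have "(\<lambda>(\<omega>, x). fhat n \<omega> a x) \<in> borel_measurable (Om n \<Otimes>\<^sub>M SX)" using fhat_meas by blast
    then show "(\<lambda>p. fhat n (fst p) a (snd p)) \<in> borel_measurable (Om n \<Otimes>\<^sub>M SX)" by (simp add: split_beta')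
  qed
  have idn: "\<And>n. (\<lambda>\<omega>. \<omega>) \<in> M \<rightarrow>\<^sub>M Om n" using meas_ident_sub[OF Om_sub] .
  have pairm: "\<And>n. (\<lambda>\<omega>. (\<omega>, X (Suc n) \<omega>)) \<in> M \<rightarrow>\<^sub>M Om n \<Otimes>\<^sub>M SX"
    by (rule measurable_Pair[OF idn Xm])
  have fhXm[measurable]: "\<And>n a. (\<lambda>\<omega>. fhat n \<omega> a (X (Suc n) \<omega>)) \<in> borel_measurable M"
    using measurable_compose[OF pairm fhm] by simp
  have fhX2: "\<And>n a. integrable M (\<lambda>\<omega>. (fhat n \<omega> a (X (Suc n) \<omega>))\<^sup>2)"
    using var_fhat[rule_format, of "Suc n" for n] by simp
  have fX2: "\<And>n a. integrable M (\<lambda>\<omega>. (f a (X (Suc n) \<omega>))\<^sup>2)"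
  proof -
    fix n a
    have "integrable (distr M SX (X (Suc n))) (\<lambda>x. (f a x)\<^sup>2)" using fL2 PXt[of "Suc n"] by simp
    then show "integrable M (\<lambda>\<omega>. (f a (X (Suc n) \<omega>))\<^sup>2)" by (subst (asm) integrable_distr_eq) auto
  qed
  have ind: "\<And>n a' B. a' \<in> sets (Om n) \<Longrightarrow> B \<in> sets SX \<Longrightarrow>
      prob (a' \<inter> (X (Suc n) -` B \<inter> space M)) = prob a' * prob (X (Suc n) -` B \<inter> space M)"
  proof -
    fix n a' B assume a': "a' \<in> sets (Om n)" and B: "B \<in> sets SX"
    have I: "indep_set (sets (Om n)) (sets (vimage_algebra (space M) (tuple X Y0 Y1 (Suc n)) (SX \<Otimes>\<^sub>M borel \<Otimes>\<^sub>M borel)))"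
      using fresh[rule_format, of "Suc n"] by simp
    have BB: "B \<times> UNIV \<times> UNIV \<in> sets (SX \<Otimes>\<^sub>M borel \<Otimes>\<^sub>M (borel :: real measure))"
      using B by (intro pair_measureI) auto
    have eq: "X (Suc n) -` B \<inter> space M = tuple X Y0 Y1 (Suc n) -` (B \<times> UNIV \<times> UNIV) \<inter> space M"
      by (auto simp: tuple_def)
    have "tuple X Y0 Y1 (Suc n) -` (B \<times> UNIV \<times> UNIV) \<inter> space M \<in>
        {tuple X Y0 Y1 (Suc n) -` A \<inter> space M | A. A \<in> sets (SX \<Otimes>\<^sub>M borel \<Otimes>\<^sub>M borel)}"
      using BB by blast
    then have xin: "X (Suc n) -` B \<inter> space M \<in> sets (vimage_algebra (space M) (tuple X Y0 Y1 (Suc n)) (SX \<Otimes>\<^sub>M borel \<Otimes>\<^sub>M borel))"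
      unfolding eq by (subst sets_vimage_algebra2) (use measurable_space[OF tm] in auto)
    show "prob (a' \<inter> (X (Suc n) -` B \<inter> space M)) = prob a' * prob (X (Suc n) -` B \<inter> space M)"
      using I[unfolded indep_sets2_eq] a' xin by blast
  qed
  have PXs: "\<And>n. distr M SX (X (Suc n)) = PX" by (rule PXt) simp
  define La where "La a n \<omega> = (\<integral>x. (fhat n \<omega> a x - f a x)\<^sup>2 \<partial>PX)" for a n \<omega>
  define G2 where "G2 = (\<integral>x. (f True x - f False x - theta0)\<^sup>2 \<partial>PX)"
  define Z where "Z n \<omega> = real_cond_exp M (Om n)
           (\<lambda>\<omega>. (fhat n \<omega> True (X (Suc n) \<omega>) - fhat n \<omega> False (X (Suc n) \<omega>) - theta0)\<^sup>2
               - (f True (X (Suc n) \<omega>) - f False (X (Suc n) \<omega>) - theta0)\<^sup>2) \<omega>" for n \<omega>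
  have bnd: "\<And>n d. 0 < d \<Longrightarrow> AE \<omega> in M. \<bar>Z n \<omega>\<bar> \<le> 2 * (1 + 1/d) * (La True n \<omega> + La False n \<omega>) + d * G2"
  proof -
    fix n :: nat and d :: real assume d: "0 < d"
    let ?K = "\<lambda>p. (fhat n (fst p) True (snd p) - fhat n (fst p) False (snd p) - theta0)\<^sup>2
               - (f True (snd p) - f False (snd p) - theta0)\<^sup>2"
    have Km: "?K \<in> borel_measurable (Om n \<Otimes>\<^sub>M SX)" by measurable
    have fXm: "\<And>a. (\<lambda>\<omega>. f a (X (Suc n) \<omega>)) \<in> borel_measurable M" by measurable
    have Ki: "integrable M (\<lambda>\<omega>. ?K (\<omega>, X (Suc n) \<omega>))"
      unfolding fst_conv snd_conv
      by (rule comb_int[OF fhXm fhXm fXm fXm fhX2 fhX2 fX2 fX2])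
    have ae1: "AE \<omega> in M. Z n \<omega> = (\<integral>x. ?K (\<omega>, x) \<partial>PX)"
      using freeze(2)[OF Om_sub[of n] Xm[of "Suc n"] ind Km Ki] unfolding Z_def PXs fst_conv snd_conv .
    have ae2: "\<And>a. AE \<omega> in M. integrable PX (\<lambda>x. (fhat n \<omega> a x)\<^sup>2)"
    proof -
      fix a
      have K2m: "(\<lambda>p. (fhat n (fst p) a (snd p))\<^sup>2) \<in> borel_measurable (Om n \<Otimes>\<^sub>M SX)" by measurable
      show "AE \<omega> in M. integrable PX (\<lambda>x. (fhat n \<omega> a x)\<^sup>2)"
        using freeze(1)[OF Om_sub[of n] Xm[of "Suc n"] ind K2m] fhX2[of n a] unfolding PXs fst_conv snd_conv by blast
    qed
    show "AE \<omega> in M. \<bar>Z n \<omega>\<bar> \<le> 2 * (1 + 1/d) * (La True n \<omega> + La False n \<omega>) + d * G2"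
      using ae1 ae2[of True] ae2[of False] AE_space
    proof eventually_elim
      case (elim \<omega>)
      have sec: "\<And>a. fhat n \<omega> a \<in> borel_measurable PX"
      proof -
        fix a
        have "\<omega> \<in> space (Om n)" using elim Om_sets by auto
        then have "(\<lambda>x. fhat n (fst (\<omega>, x)) a (snd (\<omega>, x))) \<in> borel_measurable SX"
          by (rule measurable_Pair2[OF fhm])
        then show "fhat n \<omega> a \<in> borel_measurable PX" by (simp add: PX_def)
      qed
      have fPX: "\<And>a. f a \<in> borel_measurable PX" by (simp add: PX_def)
      have "\<bar>Z n \<omega>\<bar> = \<bar>\<integral>x. (fhat n \<omega> True x - fhat n \<omega> False x - theta0)\<^sup>2 - (f True x - f False x - theta0)\<^sup>2 \<partial>PX\<bar>"
        using elim by simp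
      also have "\<dots> \<le> 2 * (1 + 1/d) * (La True n \<omega> + La False n \<omega>) + d * G2"
        unfolding La_def G2_def
        by (rule PXp.int_bound[OF sec[of True] sec[of False] fPX[of True] fPX[of False] elim(2) elim(3) fL2[of True] fL2[of False] d])
      finally show ?case .
    qed
  qed
  have Lam[measurable]: "\<And>a n. (\<lambda>\<omega>. La a n \<omega>) \<in> borel_measurable M"
  proof -
    fix a n
    have "(\<lambda>p. (fhat n (fst p) a (snd p) - f a (snd p))\<^sup>2) \<in> borel_measurable (Om n \<Otimes>\<^sub>M SX)" by measurable
    moreover have "sets (Om n \<Otimes>\<^sub>M PX) = sets (Om n \<Otimes>\<^sub>M SX)"
      unfolding PX_def by (rule sets_pair_measure_cong) simp_all
    ultimately have "(\<lambda>p. (fhat n (fst p) a (snd p) - f a (snd p))\<^sup>2) \<in> borel_measurable (Om n \<Otimes>\<^sub>M PX)"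
      by (simp cong: measurable_cong_sets)
    then have "(\<lambda>\<omega>. \<integral>x. (fhat n \<omega> a x - f a x)\<^sup>2 \<partial>PX) \<in> borel_measurable (Om n)"
      using PXp.borel_measurable_lebesgue_integral[of "\<lambda>\<omega> x. (fhat n \<omega> a x - f a x)\<^sup>2" "Om n"]
      by (simp add: split_beta')
    then show "(\<lambda>\<omega>. La a n \<omega>) \<in> borel_measurable M"
      unfolding La_def by (rule measurable_from_subalg[OF Om_sub])
  qed
  have eqL: "\<And>a n \<omega>. L2dist PX (fhat n \<omega> a) (f a) = sqrt (La a n \<omega>)"
    by (simp add: L2dist_def La_def)
  have Zfold: "\<And>n \<omega>. real_cond_exp M (Om n)
           (\<lambda>\<omega>. (fhat n \<omega> True (X (Suc n) \<omega>) - fhat n \<omega> False (X (Suc n) \<omega>) - theta0)\<^sup>2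
               - (f True (X (Suc n) \<omega>) - f False (X (Suc n) \<omega>) - theta0)\<^sup>2) \<omega> = Z n \<omega>"
    by (simp add: Z_def)
  show ?thesis
    unfolding op1_def Zfold
  proof (intro allI impI)
    fix e :: real assume e: "0 < e"
    have G2nn: "0 \<le> G2" unfolding G2_def by (rule integral_nonneg_AE) simp
    define d where "d = e / (2 * (G2 + 1))"
    have d: "0 < d" using e G2nn by (simp add: d_def)
    have dG: "d * G2 < e / 2"
      unfolding d_def using e G2nn by (simp add: field_simps)
    define C where "C = 2 * (1 + 1/d)"
    have C: "0 < C" using d by (simp add: C_def add_pos_pos)
    define r where "r = sqrt (e / (4 * C))"
    have r: "0 < r" using e C by (simp add: r_def)
    have r2: "r\<^sup>2 = e / (4 * C)" using e C by (simp add: r_def)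
    have Cr: "2 * C * r\<^sup>2 = e / 2" using r2 C by (simp add: field_simps)
    let ?T = "\<lambda>a n. {\<omega> \<in> space M. r < \<bar>k n * L2dist PX (fhat n \<omega> a) (f a)\<bar>}"
    have Tm: "\<And>a n. ?T a n \<in> sets M"
      unfolding eqL by measurable
    have keyT: "\<And>a n \<omega>. \<omega> \<in> space M \<Longrightarrow> r\<^sup>2 < La a n \<omega> \<Longrightarrow> \<omega> \<in> ?T a n"
    proof -
      fix a n \<omega> assume sp: "\<omega> \<in> space M" and lt: "r\<^sup>2 < La a n \<omega>"
      have s1: "r < sqrt (La a n \<omega>)" by (rule real_less_rsqrt[OF lt])
      have s0: "0 \<le> sqrt (La a n \<omega>)" using s1 r by linarith
      have "sqrt (La a n \<omega>) \<le> k n * sqrt (La a n \<omega>)"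
        using k_ge[rule_format, of n] s0 by (simp add: mult_le_cancel_right1)
      then have "r < \<bar>k n * sqrt (La a n \<omega>)\<bar>" using s1 by linarith
      then show "\<omega> \<in> ?T a n" using sp by (simp add: eqL)
    qed
    have incl: "\<And>n. AE \<omega> in M. \<omega> \<in> {\<omega> \<in> space M. e < \<bar>Z n \<omega>\<bar>} \<longrightarrow> \<omega> \<in> ?T True n \<union> ?T False n"
    proof -
      fix n
      show "AE \<omega> in M. \<omega> \<in> {\<omega> \<in> space M. e < \<bar>Z n \<omega>\<bar>} \<longrightarrow> \<omega> \<in> ?T True n \<union> ?T False n"
        using bnd[OF d, of n]
      proof eventually_elim
        case (elim \<omega>)
        show ?case
        proof
          assume "\<omega> \<in> {\<omega> \<in> space M. e < \<bar>Z n \<omega>\<bar>}"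
          then have sp: "\<omega> \<in> space M" and ez: "e < \<bar>Z n \<omega>\<bar>" by auto
          have "C * (2 * r\<^sup>2) < C * (La True n \<omega> + La False n \<omega>)"
            using ez elim dG Cr unfolding C_def by (simp add: algebra_simps)
          then have "2 * r\<^sup>2 < La True n \<omega> + La False n \<omega>"
            using C by (simp add: mult_less_cancel_left_pos)
          then have "r\<^sup>2 < La True n \<omega> \<or> r\<^sup>2 < La False n \<omega>" by linarith
          then show "\<omega> \<in> ?T True n \<union> ?T False n" using keyT[OF sp] by blast
        qed
      qed
    qed
    have mb: "\<And>n. measure M {\<omega> \<in> space M. e < \<bar>Z n \<omega>\<bar>} \<le> measure M (?T True n) + measure M (?T False n)"
    proof -
      fix n
      have "measure M {\<omega> \<in> space M. e < \<bar>Z n \<omega>\<bar>} \<le> measure M (?T True n \<union> ?T False n)"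
        by (rule finite_measure_mono_AE[OF incl]) (use Tm in auto)
      also have "\<dots> \<le> measure M (?T True n) + measure M (?T False n)"
        by (rule measure_subadditive) (use Tm in auto)
      finally show "measure M {\<omega> \<in> space M. e < \<bar>Z n \<omega>\<bar>} \<le> measure M (?T True n) + measure M (?T False n)" .
    qed
    have lim: "\<And>a. (\<lambda>n. measure M (?T a n)) \<longlonglongrightarrow> 0"
      using fhat_rate r unfolding op1_def by blast
    show "(\<lambda>n. measure M {\<omega> \<in> space M. e < \<bar>Z n \<omega>\<bar>}) \<longlonglongrightarrow> 0"
    proof (rule tendsto_sandwich[where f="\<lambda>_. 0" and h="\<lambda>n. measure M (?T True n) + measure M (?T False n)"])
      show "((\<lambda>n. measure M (?T True n) + measure M (?T False n)) \<longlongrightarrow> 0) sequentially"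
        using tendsto_add[OF lim[of True] lim[of False]] by simp
    qed (use mb in auto)
  qed
qed

end
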